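(* Let $\beta$ be a primitive $2p$-th root of unity in $\mathbb{F}_q$, let $\eta_0=\sum_{i\in D_0^{(p)}}\beta^{2i}$, $\eta_1=\sum_{i\in D_1^{(p)}}\beta^{2i}$, and let $S(x)$ be the generating polynomial of the sequence $s$, viewed in $\mathbb{F}_q[x]$. Then, with integers interpreted in $\mathbb{F}_q$ via the canonical map $\mathbb{Z}\to\mathbb{F}_q$: (1) if $p\equiv\pm1\pmod 8$, $$S(\beta^k)=\begin{cases} p, & k=0,\\ 1, & k\in D_0^{(2p)}\cup D_1^{(2p)}\cup\{p\},\\ 1+2\eta_1, & k\in 2D_0^{(p)},\\ 1+2\eta_0, & k\in 2D_1^{(p)};\end{cases}$$ (2) if $p\equiv\pm3\pmod 8$, $$S(\beta^k)=\begin{cases} p, & k=0,\\ 1, & k=p,\\ -2\eta_0, & k\in D_0^{(2p)},\\ -2\eta_1, & k\in D_1^{(2p)},\\ 0, & k\in 2D_0^{(p)}\cup 2D_1^{(p)}.\end{cases}$$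
   Context: Let $p$ be an odd prime and $g$ an odd integer which is a primitive root modulo $p$ and modulo $2p$. Define $D_0^{(p)}=\{g^{2k}\bmod p : 0\le k\le \frac{p-1}{2}-1\}$, $D_1^{(p)}=\{g^{2k+1}\bmod p : 0\le k\le \frac{p-1}{2}-1\}$, $D_0^{(2p)}=\{g^{2k}\bmod 2p : 0\le k\le \frac{p-1}{2}-1\}$, $D_1^{(2p)}=\{g^{2k+1}\bmod 2p : 0\le k\le \frac{p-1}{2}-1\}$, viewed as subsets of $\{0,\dots,p-1\}$ resp. $\mathbb{Z}_{2p}=\{0,1,\dots,2p-1\}$. For $j\in\{0,1\}$ let $2D_j^{(p)}=\{2a \bmod 2p : a\in D_j^{(p)}\}\subseteq \mathbb{Z}_{2p}$. Then $\mathbb{Z}_{2p}$ is the disjoint union of $D_0^{(2p)},D_1^{(2p)},2D_0^{(p)},2D_1^{(p)},\{p\},\{0\}$. Let $C_1=D_1^{(2p)}\cup 2D_1^{(p)}\cup\{0\}$ and $C_0=D_0^{(2p)}\cup 2D_0^{(p)}\cup\{p\}$. The binary sequence $s=(s_i)_{i\ge 0}$ of period $2p$ is defined by $s_i=1$ if $i\bmod 2p\in C_1$ and $s_i=0$ if $i\bmod 2p\in C_0$. Its generating polynomial is $S(x)=\sum_{i=0}^{2p-1}s_ix^i=1+\sum_{i\in D_1^{(2p)}}x^i+\sum_{i\in 2D_1^{(p)}}x^i$. Let $r\ge 5$ be a prime with $r\ne p$, $m$ the multiplicative order of $r$ modulo $p$, and $q=r^m$ (so $2p\mid q-1$). *)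

theory Defs
  imports "HOL-Number_Theory.Number_Theory" "HOL-Computational_Algebra.Polynomial" "HOL-Library.Cardinality"
begin

definition D0p :: "nat \<Rightarrow> nat \<Rightarrow> nat set" where
  "D0p g p = {g ^ (2*k) mod p | k. k < (p - 1) div 2}"

definition D1p :: "nat \<Rightarrow> nat \<Rightarrow> nat set" where
  "D1p g p = {g ^ (2*k+1) mod p | k. k < (p - 1) div 2}"

definition D02p :: "nat \<Rightarrow> nat \<Rightarrow> nat set" where
  "D02p g p = {g ^ (2*k) mod (2*p) | k. k < (p - 1) div 2}"

definition D12p :: "nat \<Rightarrow> nat \<Rightarrow> nat set" where
  "D12p g p = {g ^ (2*k+1) mod (2*p) | k. k < (p - 1) div 2}"

definition twoD :: "nat \<Rightarrow> nat set \<Rightarrow> nat set" where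
  "twoD p A = {(2*a) mod (2*p) | a. a \<in> A}"

definition C1 :: "nat \<Rightarrow> nat \<Rightarrow> nat set" where
  "C1 g p = D12p g p \<union> twoD p (D1p g p) \<union> {0}"

definition seq_s :: "nat \<Rightarrow> nat \<Rightarrow> nat \<Rightarrow> nat" where
  "seq_s g p i = (if i mod (2*p) \<in> C1 g p then 1 else 0)"

definition gen_poly :: "nat \<Rightarrow> nat \<Rightarrow> 'a::comm_ring_1 poly" where
  "gen_poly g p = (\<Sum>i<2*p. monom (of_nat (seq_s g p i)) i)"

end

theory Submission
  imports Defs
begin


lemma even_mod_evenmod: "even (m::nat) \<Longrightarrow> even (a mod m) \<longleftrightarrow> even a"
  by (simp add: dvd_mod_iff)

lemma pow_periodic: "(d::'a::comm_ring_1) ^ p = 1 \<Longrightarrow> d ^ n = d ^ (n mod p)"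
  by (metis div_mult_mod_eq power_add power_mult power_one mult_1 mult.commute)

lemma par: "(p::nat) = 2*h+1 \<Longrightarrow> even (h - h div 2) \<longleftrightarrow> p mod 8 = 1 \<or> p mod 8 = 7"
  by presburger
lemma par2: "nat (int h - int h div 2) = h - h div 2"
  using zdiv_int[of h 2] by simp
lemma hn: "p \<ge> 1 \<Longrightarrow> (int p - 1) div 2 = int ((p - 1) div 2)"
  using zdiv_int[of "p-1" 2] by (simp add: of_nat_diff)
lemma m1: assumes "(p::nat) > 2" shows "[(-1::int)^n = 1] (mod int p) \<longleftrightarrow> even n"
proof (cases "even n")
  case True thus ?thesis by simp
next
  case False
  hence "(-1::int)^n = -1" by simp
  moreover have "\<not> [(-1::int) = 1] (mod int p)"
  proof
    assume "[(-1::int) = 1] (mod int p)"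
    hence "int p dvd 2" by (simp add: cong_iff_dvd_diff)
    hence "p dvd 2" by presburger
    hence "p \<le> 2" using dvd_imp_le by simp
    thus False using assms by simp
  qed
  ultimately show ?thesis using False by simp
qed
context GAUSS begin
lemma card_E_2: assumes "a = 2"
  shows "card E = nat (((int p - 1) div 2) - ((int p - 1) div 2) div 2)"
proof -
  define H where "H = (int p - 1) div 2"
  have C: "C = (\<lambda>x. x*2) ` A"
    unfolding C_def B_def image_image
  proof (intro image_cong refl)
    fix x assume "x \<in> A"
    hence "0 < x" "x \<le> H" by (auto simp: A_def H_def)
    hence "0 \<le> x*2" "x*2 < int p" unfolding H_def by presburger+
    thus "x * a mod int p = x*2" using assms by simp
  qed
  have "E = (\<lambda>x. x*2) ` {H div 2 + 1..H}"
  proof -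
    have "E = (\<lambda>x. x*2) ` A \<inter> {H<..}" unfolding E_def C H_def ..
    also have "\<dots> = (\<lambda>x. x*2) ` {H div 2 + 1..H}"
    proof
      show "(\<lambda>x. x*2) ` A \<inter> {H<..} \<subseteq> (\<lambda>x. x*2) ` {H div 2 + 1..H}"
      proof
        fix y assume "y \<in> (\<lambda>x. x*2) ` A \<inter> {H<..}"
        then obtain x where "x \<in> A" "y = x*2" "H < y" by auto
        hence "x \<in> {H div 2 + 1..H}" unfolding A_def H_def by (auto; presburger)
        thus "y \<in> (\<lambda>x. x*2) ` {H div 2 + 1..H}" using \<open>y = x*2\<close> by blast
      qed
      show "(\<lambda>x. x*2) ` {H div 2 + 1..H} \<subseteq> (\<lambda>x. x*2) ` A \<inter> {H<..}"
      proof
        fix y assume "y \<in> (\<lambda>x. x*2) ` {H div 2 + 1..H}"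
        then obtain x where x: "x \<in> {H div 2 + 1..H}" "y = x*2" by auto
        have "0 \<le> H" using p_ge_2 unfolding H_def by simp
        have x1: "H div 2 + 1 \<le> x" "x \<le> H" using x by auto
        have "0 < x" using x1 \<open>0 \<le> H\<close> by presburger
        have "H < x*2" using x1 by presburger
        hence "x \<in> A" "H < y" unfolding A_def using \<open>0 < x\<close> x1 H_def x by auto
        thus "y \<in> (\<lambda>x. x*2) ` A \<inter> {H<..}" using x by blast
      qed
    qed
    finally show ?thesis .
  qed
  moreover have "inj_on (\<lambda>x::int. x*2) S" for S by (rule inj_onI) simp
  ultimately have "card E = card {H div 2 + 1..H}" by (simp add: card_image)
  thus ?thesis unfolding H_def by simp
qed
end

locale cyc =
  fixes p g :: nat
  assumes p_prime: "prime p" and p_odd: "odd p" and g_prim: "residue_primroot p g"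
begin

definition h where "h = (p - 1) div 2"

lemma p_gt2: "p > 2"
  using prime_ge_2_nat[OF p_prime] p_odd by (cases "p=2") auto

lemma p1: "p - 1 = 2*h" using p_odd p_gt2 unfolding h_def by presburger

lemma h_pos: "h > 0" using p1 p_gt2 by linarith

lemma cop: "coprime p g" using g_prim by (simp add: residue_primroot_def)

lemma cg: "coprime g p" using cop by (simp add: ac_simps)

lemma ord_g: "ord p g = p - 1"
  using g_prim p_prime by (simp add: residue_primroot_def totient_prime)

lemma pow_eq: "g^a mod p = g^b mod p \<longleftrightarrow> a mod (2*h) = b mod (2*h)"
  using order_divides_expdiff[OF cop, of a b] ord_g p1 by (simp add: cong_def)

lemma D0_alt: "D0p g p = (\<lambda>k. g^(2*k) mod p) ` {..<h}"
  by (auto simp: D0p_def h_def)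

lemma D1_alt: "D1p g p = (\<lambda>k. g^(2*k+1) mod p) ` {..<h}"
  by (auto simp: D1p_def h_def)

lemma pow_even: assumes "even j" shows "g^j mod p \<in> D0p g p"
proof -
  obtain t where t: "j = 2*t" using assms by blast
  have "(2*t) mod (2*h) = (2*(t mod h)) mod (2*h)"
    by simp
  hence "g^j mod p = g^(2*(t mod h)) mod p" using pow_eq t by simp
  moreover have "t mod h < h" using h_pos by simp
  ultimately show ?thesis unfolding D0_alt by blast
qed

lemma pow_odd: assumes "odd j" shows "g^j mod p \<in> D1p g p"
proof -
  obtain t where t: "j = 2*t+1" using assms oddE by blast
  have "(2*t+1) mod (2*h) = (2*(t mod h)+1) mod (2*h)"
  proof -
    have e: "2*t+1 = (2*(t mod h)+1) + (2*h)*(t div h)"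
    proof -
      have "t = h*(t div h) + t mod h" by simp
      then show ?thesis by (metis add.commute add_mult_distrib2 mult.assoc mult_2 add.left_commute)
    qed
    show ?thesis by (subst e) (rule mod_mult_self2)
  qed
  hence "g^j mod p = g^(2*(t mod h)+1) mod p" using pow_eq[of j "2*(t mod h)+1"] t by blast
  moreover have "t mod h < h" using h_pos by simp
  ultimately show ?thesis unfolding D1_alt by blast
qed

lemma disj: "D0p g p \<inter> D1p g p = {}"
proof (rule ccontr)
  assume "D0p g p \<inter> D1p g p \<noteq> {}"
  then obtain k l where "g^(2*k) mod p = g^(2*l+1) mod p" unfolding D0_alt D1_alt by blast
  hence "(2*k) mod (2*h) = (2*l+1) mod (2*h)" using pow_eq by blast
  hence "even ((2*k) mod (2*h)) = even ((2*l+1) mod (2*h))" by simp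
  thus False by (simp add: even_mod_evenmod)
qed

lemma gen: assumes "\<not> p dvd c" shows "\<exists>j. c mod p = g^j mod p"
proof -
  have bij: "bij_betw (\<lambda>i. g ^ i mod p) {..<totient p} (totatives p)"
    using residue_primroot_is_generator[OF _ g_prim] p_gt2 by simp
  have "coprime p c" using assms p_prime by (simp add: prime_imp_coprime)
  hence "coprime c p" by (simp add: ac_simps)
  hence "coprime (c mod p) p" using coprime_mod_left_iff[of p c] p_gt2 by simp
  hence "c mod p \<in> totatives p"
    using assms p_prime p_gt2
    by (auto simp: totatives_def mod_greater_zero_iff_not_dvd intro!: less_imp_le)
  thus ?thesis using bij unfolding bij_betw_def by blast
qed

lemma cls: "\<not> p dvd c \<Longrightarrow> c mod p \<in> D0p g p \<or> c mod p \<in> D1p g p"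
proof -
  assume "\<not> p dvd c"
  then obtain j where j: "c mod p = g^j mod p" using gen by blast
  show ?thesis using pow_even[of j] pow_odd[of j] j by (cases "even j") auto
qed

lemma D_lt: "D0p g p \<subseteq> {1..<p}" "D1p g p \<subseteq> {1..<p}"
proof -
  have "g^j mod p \<in> {1..<p}" for j
  proof -
    have "coprime p (g^j)" using cop by simp
    have "\<not> p dvd g^j"
    proof
      assume "p dvd g^j"
      hence "p dvd g" using p_prime prime_dvd_power by blast
      hence "is_unit p" using cop coprime_absorb_left by blast
      thus False using p_gt2 by simp
    qed
    thus ?thesis using p_gt2 by (auto simp: mod_greater_zero_iff_not_dvd Suc_le_eq)
  qed
  thus "D0p g p \<subseteq> {1..<p}" "D1p g p \<subseteq> {1..<p}" unfolding D0_alt D1_alt image_subset_iff by blast+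
qed

lemma union: "D0p g p \<union> D1p g p = {1..<p}"
proof
  show "D0p g p \<union> D1p g p \<subseteq> {1..<p}" using D_lt by auto
  show "{1..<p} \<subseteq> D0p g p \<union> D1p g p"
  proof
    fix x assume x: "x \<in> {1..<p}"
    hence "\<not> p dvd x" by (auto dest: dvd_imp_le)
    thus "x \<in> D0p g p \<union> D1p g p" using cls[of x] x by auto
  qed
qed

lemma card_D: "card (D0p g p) = h" "card (D1p g p) = h"
proof -
  have "inj_on (\<lambda>k. g^(2*k) mod p) {..<h}"
  proof
    fix a b assume "a \<in> {..<h}" "b \<in> {..<h}" "g^(2*a) mod p = g^(2*b) mod p"
    thus "a = b" using pow_eq by simp
  qed
  thus "card (D0p g p) = h" unfolding D0_alt by (simp add: card_image)
  have "inj_on (\<lambda>k. g^(2*k+1) mod p) {..<h}"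
  proof
    fix a b assume ab: "a \<in> {..<h}" "b \<in> {..<h}" and "g^(2*a+1) mod p = g^(2*b+1) mod p"
    hence "(2*a+1) mod (2*h) = (2*b+1) mod (2*h)" using pow_eq by blast
    thus "a = b" using ab by simp
  qed
  thus "card (D1p g p) = h" unfolding D1_alt by (simp add: card_image)
qed

lemma mulmod: "c mod p = g^i mod p \<Longrightarrow> x mod p = g^j mod p \<Longrightarrow> (c*x) mod p = g^(i+j) mod p"
  by (metis mod_mult_eq power_add)

lemma inj_mul: assumes "coprime c p" shows "inj_on (\<lambda>j. c*j mod p) {..<p}"
proof
  fix x y assume xy: "x \<in> {..<p}" "y \<in> {..<p}" and "c*x mod p = c*y mod p"
  hence "[c*x = c*y] (mod p)" by (simp add: cong_def)
  hence "[x = y] (mod p)" using cong_mult_lcancel_nat[OF assms] by simp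
  thus "x = y" using xy cong_less_modulus_unique_nat by auto
qed

lemma cp_of: assumes c: "c mod p = g^i mod p" shows "coprime c p"
proof -
  have "coprime (g^i) p" using cg by simp
  hence "coprime (g^i mod p) p" using coprime_mod_left_iff[of p "g^i"] p_gt2 by simp
  hence "coprime (c mod p) p" using c by simp
  thus ?thesis using coprime_mod_left_iff[of p c] p_gt2 by simp
qed

lemma image_mul:
  assumes c: "c mod p = g^i mod p"
  shows "(\<lambda>j. c*j mod p) ` D0p g p = (if even i then D0p g p else D1p g p)"
        "(\<lambda>j. c*j mod p) ` D1p g p = (if even i then D1p g p else D0p g p)"
proof -
  have cp: "coprime c p" using cp_of[OF c] .
  have inj: "inj_on (\<lambda>j. c*j mod p) A" if "A \<subseteq> {..<p}" for A
    using inj_on_subset[OF inj_mul[OF cp] that] .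
  have sub: "D0p g p \<subseteq> {..<p}" "D1p g p \<subseteq> {..<p}" using D_lt by auto
  have fin: "finite (D0p g p)" "finite (D1p g p)" unfolding D0_alt D1_alt by auto
  have i0: "(\<lambda>j. c*j mod p) ` D0p g p \<subseteq> (if even i then D0p g p else D1p g p)"
  proof
    fix y assume "y \<in> (\<lambda>j. c*j mod p) ` D0p g p"
    then obtain k where y: "y = c * (g^(2*k) mod p) mod p" unfolding D0_alt by auto
    have "y = g^(i+2*k) mod p" using mulmod[OF c, of "g^(2*k) mod p" "2*k"] y by simp
    thus "y \<in> (if even i then D0p g p else D1p g p)" using pow_even pow_odd by auto
  qed
  have i1: "(\<lambda>j. c*j mod p) ` D1p g p \<subseteq> (if even i then D1p g p else D0p g p)"
  proof
    fix y assume "y \<in> (\<lambda>j. c*j mod p) ` D1p g p"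
    then obtain k where y: "y = c * (g^(2*k+1) mod p) mod p" unfolding D1_alt by auto
    have yeq: "y = g^(i+(2*k+1)) mod p" using mulmod[OF c, of "g^(2*k+1) mod p" "2*k+1"] y by simp
    show "y \<in> (if even i then D1p g p else D0p g p)"
    proof (cases "even i")
      case True
      have "g^(i+(2*k+1)) mod p \<in> D1p g p" by (rule pow_odd) (use True in simp)
      thus ?thesis using True yeq by auto
    next
      case False
      have "g^(i+(2*k+1)) mod p \<in> D0p g p" by (rule pow_even) (use False in simp)
      thus ?thesis using False yeq by auto
    qed
  qed
  have c0: "card ((\<lambda>j. c*j mod p) ` D0p g p) = h" using card_image[OF inj[OF sub(1)]] card_D by simp
  have c1: "card ((\<lambda>j. c*j mod p) ` D1p g p) = h" using card_image[OF inj[OF sub(2)]] card_D by simp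
  show "(\<lambda>j. c*j mod p) ` D0p g p = (if even i then D0p g p else D1p g p)"
  proof (cases "even i")
    case True
have "(\<lambda>j. c*j mod p) ` D0p g p = D0p g p"
      by (rule card_subset_eq[OF fin(1)]) (use i0 c0 card_D \<open>even i\<close> in auto)
    thus ?thesis using \<open>even i\<close> by simp
  next
    case False
have "(\<lambda>j. c*j mod p) ` D0p g p = D1p g p"
      by (rule card_subset_eq[OF fin(2)]) (use i0 c0 card_D \<open>odd i\<close> in auto)
    thus ?thesis using \<open>odd i\<close> by simp
  qed
  show "(\<lambda>j. c*j mod p) ` D1p g p = (if even i then D1p g p else D0p g p)"
  proof (cases "even i")
    case True
have "(\<lambda>j. c*j mod p) ` D1p g p = D1p g p"
      by (rule card_subset_eq[OF fin(2)]) (use i1 c1 card_D \<open>even i\<close> in auto)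
    thus ?thesis using \<open>even i\<close> by simp
  next
    case False
have "(\<lambda>j. c*j mod p) ` D1p g p = D0p g p"
      by (rule card_subset_eq[OF fin(1)]) (use i1 c1 card_D \<open>odd i\<close> in auto)
    thus ?thesis using \<open>odd i\<close> by simp
  qed
qed

lemma T_class:
  fixes d :: "'a::comm_ring_1"
  assumes d: "d^p = 1" and c: "c mod p = g^i mod p"
  shows "(\<Sum>j\<in>D0p g p. d^(c*j)) = (if even i then (\<Sum>j\<in>D0p g p. d^j) else (\<Sum>j\<in>D1p g p. d^j))"
        "(\<Sum>j\<in>D1p g p. d^(c*j)) = (if even i then (\<Sum>j\<in>D1p g p. d^j) else (\<Sum>j\<in>D0p g p. d^j))"
proof -
  have cp: "coprime c p" using cp_of[OF c] .
  have sub: "D0p g p \<subseteq> {..<p}" "D1p g p \<subseteq> {..<p}" using D_lt by auto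
  have gen: "(\<Sum>j\<in>A. d^(c*j)) = (\<Sum>x\<in>(\<lambda>j. c*j mod p) ` A. d^x)" if "A \<subseteq> {..<p}" for A
  proof -
    have "(\<Sum>x\<in>(\<lambda>j. c*j mod p) ` A. d^x) = (\<Sum>j\<in>A. d^(c*j mod p))"
      by (rule sum.reindex_cong[OF inj_on_subset[OF inj_mul[OF cp] that] refl]) simp
    also have "\<dots> = (\<Sum>j\<in>A. d^(c*j))"
      by (rule sum.cong[OF refl]) (rule pow_periodic[OF d, symmetric])
    finally show ?thesis by (rule sym)
  qed
  show "(\<Sum>j\<in>D0p g p. d^(c*j)) = (if even i then (\<Sum>j\<in>D0p g p. d^j) else (\<Sum>j\<in>D1p g p. d^j))"
  proof -
    have "(\<Sum>j\<in>D0p g p. d^(c*j)) = (\<Sum>x\<in>(\<lambda>j. c*j mod p) ` D0p g p. d^x)" by (rule gen[OF sub(1)])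
    also have "\<dots> = (\<Sum>x\<in>(if even i then D0p g p else D1p g p). d^x)" by (simp only: image_mul(1)[OF c])
    also have "\<dots> = (if even i then (\<Sum>j\<in>D0p g p. d^j) else (\<Sum>j\<in>D1p g p. d^j))" by simp
    finally show ?thesis .
  qed
  show "(\<Sum>j\<in>D1p g p. d^(c*j)) = (if even i then (\<Sum>j\<in>D1p g p. d^j) else (\<Sum>j\<in>D0p g p. d^j))"
  proof -
    have "(\<Sum>j\<in>D1p g p. d^(c*j)) = (\<Sum>x\<in>(\<lambda>j. c*j mod p) ` D1p g p. d^x)" by (rule gen[OF sub(2)])
    also have "\<dots> = (\<Sum>x\<in>(if even i then D1p g p else D0p g p). d^x)" by (simp only: image_mul(2)[OF c])
    also have "\<dots> = (if even i then (\<Sum>j\<in>D1p g p. d^j) else (\<Sum>j\<in>D0p g p. d^j))" by simp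
    finally show ?thesis .
  qed
qed

lemma two_class: assumes i: "2 = g^i mod p" shows "even i \<longleftrightarrow> p mod 8 = 1 \<or> p mod 8 = 7"
proof -
  interpret G: GAUSS p 2
  proof
    show "prime p" by (rule p_prime)
    show "2 < p" by (rule p_gt2)
    show "0 < (2::int)" by simp
    show "[2 \<noteq> 0] (mod int p)"
    proof
      assume "[2 = 0] (mod int p)"
      hence "int p dvd 2" by (simp add: cong_0_iff)
      hence "p dvd 2" by presburger
      hence "p \<le> 2" using dvd_imp_le by simp
      thus False using p_gt2 by simp
    qed
  qed
  have H: "(int p - 1) div 2 = int h" unfolding h_def using hn p_gt2 by simp
  have pre: "[2^h = (-1)^card G.E] (mod int p)" using G.pre_gauss_lemma H by simp
  have cE: "card G.E = h - h div 2" using G.card_E_2 H par2 by simp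
  have par': "even (card G.E) \<longleftrightarrow> p mod 8 = 1 \<or> p mod 8 = 7"
    using cE par[of p h] p1 p_gt2 by simp
  have "(2::nat)^h mod p = g^(i*h) mod p"
    using i by (metis power_mod power_mult)
  hence "[(2::nat)^h = 1] (mod p) \<longleftrightarrow> [g^(i*h) = 1] (mod p)" by (simp add: cong_def)
  also have "\<dots> \<longleftrightarrow> (2*h) dvd (i*h)" using ord_divides[of g "i*h" p] ord_g p1 by simp
  also have "\<dots> \<longleftrightarrow> even i" using h_pos by simp
  finally have t1: "[(2::nat)^h = 1] (mod p) \<longleftrightarrow> even i" .
  have "[(2::int)^h = 1] (mod int p) \<longleftrightarrow> [(2::nat)^h = 1] (mod p)"
    using cong_int_iff[of "2^h" 1 p] by simp
  hence t2: "[(2::int)^h = 1] (mod int p) \<longleftrightarrow> even i" using t1 by simp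
  have "[(2::int)^h = 1] (mod int p) \<longleftrightarrow> [(-1::int)^card G.E = 1] (mod int p)"
    using pre by (meson cong_sym cong_trans)
  also have "\<dots> \<longleftrightarrow> even (card G.E)" using m1 p_gt2 by simp
  finally show ?thesis using t2 par' by simp
qed

lemma mod2p: "(x mod (2*p)) mod p = x mod p" by (rule mod_mod_cancel) simp

lemma odd_pow_mod2p: "odd g \<Longrightarrow> odd (g^m mod (2*p))"
  by (simp add: even_mod_evenmod)

lemma D12_alt: "D12p g p = (\<lambda>m. g^(2*m+1) mod (2*p)) ` {..<h}"
  by (auto simp: D12p_def h_def)

lemma D02_alt: "D02p g p = (\<lambda>m. g^(2*m) mod (2*p)) ` {..<h}"
  by (auto simp: D02p_def h_def)

lemma inj1: "inj_on (\<lambda>m. g^(2*m+1) mod p) {..<h}"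
proof
  fix a b assume ab: "a \<in> {..<h}" "b \<in> {..<h}" and "g^(2*a+1) mod p = g^(2*b+1) mod p"
  hence "(2*a+1) mod (2*h) = (2*b+1) mod (2*h)" using pow_eq by blast
  thus "a = b" using ab by simp
qed

lemma inj12: "inj_on (\<lambda>m. g^(2*m+1) mod (2*p)) {..<h}"
proof
  fix a b assume ab: "a \<in> {..<h}" "b \<in> {..<h}" and e: "g^(2*a+1) mod (2*p) = g^(2*b+1) mod (2*p)"
  have "g^(2*a+1) mod p = g^(2*b+1) mod p"
    using mod2p[of "g^(2*a+1)"] mod2p[of "g^(2*b+1)"] e by simp
  thus "a = b" using inj1 ab unfolding inj_on_def by blast
qed

lemma D12_sum: "(\<Sum>i\<in>D12p g p. f i) = (\<Sum>m<h. f (g^(2*m+1) mod (2*p)))"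
  unfolding D12_alt using sum.reindex[OF inj12, of f] by simp

lemma D1_sum: "(\<Sum>i\<in>D1p g p. f i) = (\<Sum>m<h. f (g^(2*m+1) mod p))"
  unfolding D1_alt using sum.reindex[OF inj1, of f] by simp

lemma twoD_alt: assumes "A \<subseteq> {..<p}" shows "twoD p A = (\<lambda>a. 2*a) ` A"
proof -
  have "twoD p A = (\<lambda>a. 2*a mod (2*p)) ` A" by (auto simp: twoD_def)
  also have "\<dots> = (\<lambda>a. 2*a) ` A"
    by (rule image_cong[OF refl]) (use assms in auto)
  finally show ?thesis .
qed

lemma fin_D: "finite (D0p g p)" "finite (D1p g p)" "finite (D12p g p)"
  unfolding D0_alt D1_alt D12_alt by auto

end

lemma poly_gen:
  fixes x :: "'a::comm_ring_1"
  assumes "C1 g p \<subseteq> {..<2*p}"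
  shows "poly (gen_poly g p) x = (\<Sum>i\<in>C1 g p. x^i)"
proof -
  have "poly (gen_poly g p) x = (\<Sum>i<2*p. of_nat (seq_s g p i) * x^i)"
    unfolding gen_poly_def by (simp add: poly_sum poly_monom)
  also have "\<dots> = (\<Sum>i<2*p. if i \<in> C1 g p then x^i else 0)"
    by (rule sum.cong[OF refl]) (auto simp: seq_s_def)
  also have "\<dots> = (\<Sum>i\<in>{..<2*p} \<inter> C1 g p. x^i)"
    by (rule sum.inter_restrict[symmetric]) simp
  also have "{..<2*p} \<inter> C1 g p = C1 g p" using assms by blast
  finally show ?thesis .
qed



lemma r0: "(-2::'a::field) * s = -(s+s)" by (metis mult_2 mult_minus_left)
lemma r1': "(1::'a::field) - s + (-1 - s) = -(s+s)" by simp
lemma r1: "(1::'a::field) - s + (-1 - s) = - 2 * s" unfolding r0 by (rule r1')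
lemma r2: "(1::'a::field) + s + s = 1 + 2*s" by (metis mult_2 add.assoc)
lemma r3: "(1::'a::field) + (-1 - s) + s = 0" by simp
lemma r4: "(1::'a::field) + s + (-1 - s) = 0" by simp

theorem lemma8:
  fixes p g r :: nat and \<beta> :: "'a::{field,finite}"
  assumes "prime p" "odd p"
    and "odd g" "residue_primroot p g" "residue_primroot (2*p) g"
    and "prime r" "r \<ge> 5" "r \<noteq> p"
    and "CARD('a) = r ^ ord p r"
    and "\<beta> ^ (2*p) = 1" "\<forall>j. 0 < j \<and> j < 2*p \<longrightarrow> \<beta> ^ j \<noteq> 1"
  defines "\<eta>0 \<equiv> (\<Sum>i\<in>D0p g p. \<beta> ^ (2*i))"
    and "\<eta>1 \<equiv> (\<Sum>i\<in>D1p g p. \<beta> ^ (2*i))"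
    and "S \<equiv> (gen_poly g p :: 'a poly)"
  shows
   "((p mod 8 = 1 \<or> p mod 8 = 7) \<longrightarrow>
      poly S (\<beta> ^ 0) = of_nat p
      \<and> (\<forall>k \<in> D02p g p \<union> D12p g p \<union> {p}. poly S (\<beta> ^ k) = 1)
      \<and> (\<forall>k \<in> twoD p (D0p g p). poly S (\<beta> ^ k) = 1 + 2 * \<eta>1)
      \<and> (\<forall>k \<in> twoD p (D1p g p). poly S (\<beta> ^ k) = 1 + 2 * \<eta>0))
    \<and> ((p mod 8 = 3 \<or> p mod 8 = 5) \<longrightarrow>
      poly S (\<beta> ^ 0) = of_nat p
      \<and> poly S (\<beta> ^ p) = 1
      \<and> (\<forall>k \<in> D02p g p. poly S (\<beta> ^ k) = - 2 * \<eta>0)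
      \<and> (\<forall>k \<in> D12p g p. poly S (\<beta> ^ k) = - 2 * \<eta>1)
      \<and> (\<forall>k \<in> twoD p (D0p g p) \<union> twoD p (D1p g p). poly S (\<beta> ^ k) = 0))"
proof -
  interpret cyc p g using assms(1,2,4) by unfold_locales
  have b2p: "\<beta>^(2*p) = 1" using assms(10) .
  have bne: "\<beta>^j \<noteq> 1" if "0 < j" "j < 2*p" for j using assms(11) that by blast
  have bp: "\<beta>^p = -1"
  proof -
    have "(\<beta>^p)^2 = 1" using b2p by (simp add: power_mult[symmetric] mult.commute)
    hence "\<beta>^p = 1 \<or> \<beta>^p = -1" by (simp add: power2_eq_1_iff)
    moreover have "\<beta>^p \<noteq> 1" using bne[of p] p_gt2 by simp
    ultimately show ?thesis by simp
  qed
  define d where "d = - \<beta>"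
  have bd: "\<beta> = - d" unfolding d_def by simp
  have dp: "d^p = 1" unfolding d_def using bp power_minus_odd[OF p_odd, of \<beta>] by simp
  have d1: "d \<noteq> 1"
  proof
    assume "d = 1"
    hence "\<beta>^2 = 1" using bd by simp
    thus False using bne[of 2] p_gt2 by simp
  qed
  have bpow: "\<beta>^n = (-1)^n * d^n" for n unfolding bd by (rule power_minus)
  have beven: "\<beta>^(2*n) = d^(2*n)" for n unfolding bpow by simp
  define SQ where "SQ = (\<Sum>j\<in>D0p g p. d^j)"
  define SN where "SN = (\<Sum>j\<in>D1p g p. d^j)"
  have sum_all: "SQ + SN = -1"
  proof -
    have "SQ + SN = (\<Sum>j\<in>{1..<p}. d^j)"
      unfolding SQ_def SN_def union[symmetric]
      by (rule sum.union_disjoint[symmetric]) (use fin_D disj in auto)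
    moreover have "(\<Sum>j<p. d^j) = 0" using d1 dp by (simp add: sum_gp_strict)
    moreover have "(\<Sum>j<p. d^j) = 1 + (\<Sum>j\<in>{1..<p}. d^j)"
    proof -
      have "{..<p} = insert 0 {1..<p}" using p_gt2 by auto
      thus ?thesis by simp
    qed
    ultimately show ?thesis by (simp add: eq_neg_iff_add_eq_0 add.commute)
  qed
  have SQ: "SQ = -1 - SN" using sum_all by (simp add: algebra_simps eq_diff_eq)
  have SN_eq: "SN = -1 - SQ" using sum_all by (simp add: algebra_simps eq_diff_eq)
  define T where "T c = (\<Sum>j\<in>D1p g p. d^(c*j))" for c
  have Tc: "T c = (if even i then SN else SQ)" if "c mod p = g^i mod p" for c i
    unfolding T_def SN_def SQ_def using T_class(2)[OF dp that] .
  have nd2: "\<not> p dvd 2"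
  proof
    assume "p dvd 2"
    hence "p \<le> 2" using dvd_imp_le by simp
    thus False using p_gt2 by simp
  qed
  obtain i2 where i2: "2 mod p = g^i2 mod p" using gen[OF nd2] by blast
  have par: "even i2 \<longleftrightarrow> p mod 8 = 1 \<or> p mod 8 = 7"
    using two_class[of i2] i2 p_gt2 by simp
  have eta0: "\<eta>0 = (if even i2 then SQ else SN)"
    unfolding \<eta>0_def beven SQ_def SN_def using T_class(1)[OF dp i2] .
  have eta1: "\<eta>1 = (if even i2 then SN else SQ)"
    unfolding \<eta>1_def beven SQ_def SN_def using T_class(2)[OF dp i2] .

  have C1sub: "C1 g p \<subseteq> {..<2*p}"
    using p_gt2 by (auto simp: C1_def D12p_def twoD_def)
  have D12odd: "odd i" if ii: "i \<in> D12p g p" for i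
  proof -
    obtain m where "i = g^(2*m+1) mod (2*p)" using ii unfolding D12_alt by blast
    thus ?thesis using odd_pow_mod2p[OF assms(3), of "2*m+1"] by simp
  qed
  have D02odd: "odd i" if "i \<in> D02p g p" for i
    using that assms(3) odd_pow_mod2p unfolding D02_alt by auto
  have tw1: "twoD p (D1p g p) = (\<lambda>a. 2*a) ` D1p g p" by (rule twoD_alt) (use D_lt in auto)
  have tw0: "twoD p (D0p g p) = (\<lambda>a. 2*a) ` D0p g p" by (rule twoD_alt) (use D_lt in auto)
  have C1eq: "C1 g p = insert 0 (D12p g p \<union> (\<lambda>a. 2*a) ` D1p g p)"
    unfolding C1_def tw1 by auto
  have n0: "0 \<notin> D12p g p \<union> (\<lambda>a. 2*a) ` D1p g p"
    using D12odd D_lt by fastforce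
  have dj: "D12p g p \<inter> (\<lambda>a. 2*a) ` D1p g p = {}"
    using D12odd by fastforce

  have key: "poly S (\<beta>^k) = 1 + (-1)^k * T k + T (2*k)" for k
  proof -
    have "poly S (\<beta>^k) = (\<Sum>i\<in>C1 g p. (\<beta>^k)^i)"
      unfolding S_def by (rule poly_gen[OF C1sub])
    also have "\<dots> = 1 + ((\<Sum>i\<in>D12p g p. (\<beta>^k)^i) + (\<Sum>i\<in>(\<lambda>a. 2*a) ` D1p g p. (\<beta>^k)^i))"
      unfolding C1eq using n0 dj fin_D by (simp add: sum.union_disjoint)
    also have "(\<Sum>i\<in>(\<lambda>a. 2*a) ` D1p g p. (\<beta>^k)^i) = T (2*k)"
    proof -
      have "(\<Sum>i\<in>(\<lambda>a. 2*a) ` D1p g p. (\<beta>^k)^i) = (\<Sum>a\<in>D1p g p. (\<beta>^k)^(2*a))"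
        by (rule sum.reindex_cong[of "\<lambda>a. 2*a"]) (auto simp: inj_on_def)
      also have "\<dots> = T (2*k)" unfolding T_def
      proof (rule sum.cong[OF refl])
        fix a
        have "(\<beta>^k)^(2*a) = \<beta>^(2*(k*a))" by (simp add: power_mult[symmetric] ac_simps)
        also have "\<dots> = d^(2*(k*a))" by (rule beven)
        finally show "(\<beta>^k)^(2*a) = d^(2*k*a)" by (simp add: ac_simps)
      qed
      finally show ?thesis .
    qed
    also have "(\<Sum>i\<in>D12p g p. (\<beta>^k)^i) = (-1)^k * T k"
    proof -
      have "(\<Sum>i\<in>D12p g p. (\<beta>^k)^i) = (\<Sum>m<h. (\<beta>^k)^(g^(2*m+1) mod (2*p)))"
        by (rule D12_sum)
      also have "\<dots> = (\<Sum>m<h. (-1)^k * d^(k * (g^(2*m+1) mod p)))"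
      proof (rule sum.cong[OF refl])
        fix m
        define e where "e = g^(2*m+1) mod (2*p)"
        have oe: "odd e" unfolding e_def using odd_pow_mod2p assms(3) by blast
        have em: "e mod p = g^(2*m+1) mod p" unfolding e_def by (rule mod2p)
        have "(\<beta>^k)^e = \<beta>^(k*e)" by (simp add: power_mult)
        also have "\<dots> = (-1)^(k*e) * d^(k*e)" by (rule bpow)
        also have "(-1)^(k*e) = ((-1::'a)^e)^k" by (metis power_mult mult.commute)
        also have "\<dots> = ((-1::'a)^k)" using oe by simp
        also have "d^(k*e) = d^(k*e mod p)" by (rule pow_periodic[OF dp])
        also have "k*e mod p = k * (e mod p) mod p" by (simp add: mod_mult_right_eq)
        also have "d^(k * (e mod p) mod p) = d^(k*(e mod p))" by (rule pow_periodic[OF dp, symmetric])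
        finally show "(\<beta>^k)^(g^(2*m+1) mod (2*p)) = (-1)^k * d^(k * (g^(2*m+1) mod p))"
          unfolding e_def[symmetric] em .
      qed
      also have "\<dots> = (-1)^k * (\<Sum>m<h. d^(k * (g^(2*m+1) mod p)))"
        by (simp add: sum_distrib_left)
      also have "(\<Sum>m<h. d^(k * (g^(2*m+1) mod p))) = T k"
        unfolding T_def by (rule D1_sum[symmetric])
      finally show ?thesis .
    qed
    finally show ?thesis by (simp add: add.assoc)
  qed

  have cardN: "card (D1p g p) = h" by (rule card_D(2))
  have k0: "poly S (\<beta>^0) = of_nat p"
  proof -
    have "T 0 = of_nat h" unfolding T_def using cardN by simp
    hence "poly S (\<beta>^0) = 1 + 2 * of_nat h" using key[of 0] by simp
    also have "\<dots> = of_nat p"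
    proof -
      have "p = 1 + 2*h" using p1 p_gt2 by simp
      hence "(of_nat p::'a) = of_nat (1 + 2*h)" by simp
      thus ?thesis by simp
    qed
    finally show ?thesis .
  qed
  have kp: "poly S (\<beta>^p) = 1"
  proof -
    have "T p = of_nat h" "T (2*p) = of_nat h"
    proof -
      have a: "d^(p*j) = 1" for j by (metis power_mult dp power_one)
      have b: "d^(2*p*j) = 1" for j by (metis a mult.commute mult.assoc)
      show "T p = of_nat h" "T (2*p) = of_nat h" unfolding T_def using cardN by (simp_all add: a b)
    qed
    thus ?thesis using key[of p] p_odd by simp
  qed
  have kD02: "poly S (\<beta>^k) = 1 - SN + (if even i2 then SN else SQ)" if kk: "k \<in> D02p g p" for k
  proof -
    obtain m where k: "k = g^(2*m) mod (2*p)" using kk unfolding D02_alt by auto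
    have km: "k mod p = g^(2*m) mod p" unfolding k by (rule mod2p)
    have "odd k" using D02odd kk by blast
    moreover have "T k = SN" using Tc[OF km] by simp
    moreover have "T (2*k) = (if even i2 then SN else SQ)" using Tc[OF mulmod[OF i2 km]] by simp
    ultimately show ?thesis using key[of k] by simp
  qed
  have kD12: "poly S (\<beta>^k) = 1 - SQ + (if even i2 then SQ else SN)" if kk: "k \<in> D12p g p" for k
  proof -
    obtain m where k: "k = g^(2*m+1) mod (2*p)" using kk unfolding D12_alt by auto
    have km: "k mod p = g^(2*m+1) mod p" unfolding k by (rule mod2p)
    have "odd k" using D12odd kk by blast
    moreover have "T k = SQ" using Tc[OF km] by simp
    moreover have "T (2*k) = (if even i2 then SQ else SN)" using Tc[OF mulmod[OF i2 km]] by simp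
    ultimately show ?thesis using key[of k] by simp
  qed
  have kT0: "poly S (\<beta>^k) = 1 + (if even i2 then SN else SQ) + SN" if kk: "k \<in> twoD p (D0p g p)" for k
  proof -
    obtain a where a: "a \<in> D0p g p" "k = 2*a" using kk unfolding tw0 by blast
    obtain m where "a = g^(2*m) mod p" using a(1) unfolding D0_alt by blast
    hence k: "k = 2 * (g^(2*m) mod p)" using a(2) by simp
    have am: "(g^(2*m) mod p) mod p = g^(2*m) mod p" by simp
    have km: "k mod p = g^(i2 + 2*m) mod p" unfolding k by (rule mulmod[OF i2 am])
    have "even k" using k by simp
    moreover have "T k = (if even i2 then SN else SQ)" using Tc[OF km] by simp
    moreover have "T (2*k) = SN" using Tc[OF mulmod[OF i2 km]] by simp
    ultimately show ?thesis using key[of k] by simp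
  qed
  have kT1: "poly S (\<beta>^k) = 1 + (if even i2 then SQ else SN) + SQ" if kk: "k \<in> twoD p (D1p g p)" for k
  proof -
    obtain a where a: "a \<in> D1p g p" "k = 2*a" using kk unfolding tw1 by blast
    obtain m where "a = g^(2*m+1) mod p" using a(1) unfolding D1_alt by blast
    hence k: "k = 2 * (g^(2*m+1) mod p)" using a(2) by simp
    have am: "(g^(2*m+1) mod p) mod p = g^(2*m+1) mod p" by simp
    have km: "k mod p = g^(i2 + (2*m+1)) mod p" unfolding k by (rule mulmod[OF i2 am])
    have "even k" using k by simp
    moreover have "T k = (if even i2 then SQ else SN)" using Tc[OF km] by simp
    moreover have "T (2*k) = SQ" using Tc[OF mulmod[OF i2 km]] by simp
    ultimately show ?thesis using key[of k] by simp
  qed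
  show ?thesis
  proof (intro conjI impI)
    assume p8: "p mod 8 = 1 \<or> p mod 8 = 7"
    hence e: "even i2" using par by simp
    show "poly S (\<beta>^0) = of_nat p" by (rule k0)
    show "\<forall>k \<in> D02p g p \<union> D12p g p \<union> {p}. poly S (\<beta>^k) = 1"
    proof
      fix k assume "k \<in> D02p g p \<union> D12p g p \<union> {p}"
      then consider (a) "k \<in> D02p g p" | (b) "k \<in> D12p g p" | (c) "k = p" by blast
      thus "poly S (\<beta>^k) = 1"
      proof cases
        case a
        have "poly S (\<beta>^k) = 1 - SN + SN" using kD02[OF a] e by simp
        thus ?thesis by simp
      next
        case b
        have "poly S (\<beta>^k) = 1 - SQ + SQ" using kD12[OF b] e by simp
        thus ?thesis by simp
      next
        case c
        thus ?thesis using kp by simp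
      qed
    qed
    show "\<forall>k \<in> twoD p (D0p g p). poly S (\<beta>^k) = 1 + 2 * \<eta>1"
    proof
      fix k assume kk: "k \<in> twoD p (D0p g p)"
      have "poly S (\<beta>^k) = 1 + SN + SN" using kT0[OF kk] e by simp
      moreover have "\<eta>1 = SN" using eta1 e by simp
      ultimately show "poly S (\<beta>^k) = 1 + 2 * \<eta>1" using r2[of SN] by simp
    qed
    show "\<forall>k \<in> twoD p (D1p g p). poly S (\<beta>^k) = 1 + 2 * \<eta>0"
    proof
      fix k assume kk: "k \<in> twoD p (D1p g p)"
      have "poly S (\<beta>^k) = 1 + SQ + SQ" using kT1[OF kk] e by simp
      moreover have "\<eta>0 = SQ" using eta0 e by simp
      ultimately show "poly S (\<beta>^k) = 1 + 2 * \<eta>0" using r2[of SQ] by simp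
    qed
  next
    assume p8: "p mod 8 = 3 \<or> p mod 8 = 5"
    hence e: "odd i2" using par by auto
    show "poly S (\<beta>^0) = of_nat p" by (rule k0)
    show "poly S (\<beta>^p) = 1" by (rule kp)
    show "\<forall>k \<in> D02p g p. poly S (\<beta>^k) = - 2 * \<eta>0"
    proof
      fix k assume kk: "k \<in> D02p g p"
      have "poly S (\<beta>^k) = 1 - SN + SQ" using kD02[OF kk] e by simp
      moreover have "\<eta>0 = SN" using eta0 e by simp
      ultimately show "poly S (\<beta>^k) = - 2 * \<eta>0" using SQ r1[of SN] by simp
    qed
    show "\<forall>k \<in> D12p g p. poly S (\<beta>^k) = - 2 * \<eta>1"
    proof
      fix k assume kk: "k \<in> D12p g p"
      have "poly S (\<beta>^k) = 1 - SQ + SN" using kD12[OF kk] e by simp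
      moreover have "\<eta>1 = SQ" using eta1 e by simp
      ultimately show "poly S (\<beta>^k) = - 2 * \<eta>1" using SN_eq r1[of SQ] by simp
    qed
    show "\<forall>k \<in> twoD p (D0p g p) \<union> twoD p (D1p g p). poly S (\<beta>^k) = 0"
    proof
      fix k assume "k \<in> twoD p (D0p g p) \<union> twoD p (D1p g p)"
      then consider (a) "k \<in> twoD p (D0p g p)" | (b) "k \<in> twoD p (D1p g p)" by blast
      thus "poly S (\<beta>^k) = 0"
      proof cases
        case a
        have "poly S (\<beta>^k) = 1 + SQ + SN" using kT0[OF a] e by simp
        thus ?thesis using SQ r3[of SN] by simp
      next
        case b
        have "poly S (\<beta>^k) = 1 + SN + SQ" using kT1[OF b] e by simp
        thus ?thesis using SQ r4[of SN] by simp
      qed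
    qed
  qed
qed

end
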